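(* Let $c=\frac32\left((1+\sqrt2)^{1/3}-(1+\sqrt2)^{-1/3}\right)=0.8941\cdots$ and let $x$ be a real number with $-3<x<c$. (i) We have $$\sum_{k=1}^\infty\frac{((2x-3)^2k+2x^2+2x-3)x^{3k}}{(x-1)^k\binom{3k}k}=-2x^3\frac{x+7}{(x+3)^2}+\frac{8x^2(x-1)q(x)}{(x+3)^2\sqrt{(1-x)(3+x)}},$$ where $$q(x)=\begin{cases}\arctan\left(\frac x{x+2}\sqrt{\frac{3+x}{1-x}}\right)&\text{if}\ -2<x<1,\\ -\frac{\pi}2&\text{if}\ x=-2,\\ \arctan\left(\frac x{x+2}\sqrt{\frac{3+x}{1-x}}\right)-\pi&\text{if}\ -3<x<-2.\end{cases}$$ (ii) We have $$\sum_{k=0}^\infty\frac{(s(x)k+t(x))x^{3k}}{(x-1)^k\binom{3k}k}=12x^2(1-x)\log(1-x)-27(1-x)(x^2-6x+3),$$ where $$s(x)=(x+3)(2x-3)^2(x^2-12x+9)=4x^5-48x^4+9x^3+351x^2-567x+243$$ and $$t(x)=2x^5-48x^4+69x^3-189x^2+243x-81.$$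
   Context: $\arctan$ denotes the principal branch with values in $(-\pi/2,\pi/2)$; $\log$ is the natural logarithm. *)

theory Defs
  imports "HOL-Analysis.Analysis"
begin

definition c_const :: real where
  "c_const = 3/2 * ((1 + sqrt 2) powr (1/3) - (1 + sqrt 2) powr (-(1/3)))"

definition q_fun :: "real \<Rightarrow> real" where
  "q_fun x = (if -2 < x \<and> x < 1 then arctan (x / (x + 2) * sqrt ((3 + x) / (1 - x)))
              else if x = -2 then - pi / 2
              else arctan (x / (x + 2) * sqrt ((3 + x) / (1 - x))) - pi)"

definition s_fun :: "real \<Rightarrow> real" where
  "s_fun x = (x + 3) * (2*x - 3)^2 * (x^2 - 12*x + 9)"

definition t_fun :: "real \<Rightarrow> real" where
  "t_fun x = 2*x^5 - 48*x^4 + 69*x^3 - 189*x^2 + 243*x - 81"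

end

theory Submission
  imports Defs
begin


lemma n2_pow_tendsto:
  fixes y :: real assumes "\<bar>y\<bar> < 1"
  shows "(\<lambda>n. real n ^ 2 * y ^ n) \<longlonglongrightarrow> 0"
proof -
  define s where "s = sqrt \<bar>y\<bar>"
  have s: "norm s < 1" using assms by (simp add: s_def)
  have "(\<lambda>n. real n * s ^ n) \<longlonglongrightarrow> 0" using powser_times_n_limit_0[OF s] by simp
  then have "(\<lambda>n. (real n * s ^ n) * (real n * s ^ n)) \<longlonglongrightarrow> 0 * 0"
    by (intro tendsto_mult)
  moreover have "(real n * s ^ n) * (real n * s ^ n) = norm (real n ^ 2 * y ^ n)" for n
  proof -
    have "s ^ n * s ^ n = \<bar>y\<bar> ^ n"
      by (simp add: s_def power_mult_distrib[symmetric] flip: power_add mult_2)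
    then show ?thesis by (simp add: abs_mult power_abs power2_eq_square algebra_simps)
  qed
  ultimately have "(\<lambda>n. norm (real n ^ 2 * y ^ n)) \<longlonglongrightarrow> 0" by simp
  then show ?thesis by (simp only: real_norm_def tendsto_rabs_zero_iff)
qed

lemma sums_quad_aux: fixes z a b c :: real assumes "z \<noteq> 0" shows
 "(c + (1-z) * (a / z + (b + 2 * (a / z) * (1-z)) / z)) / z = a*(1-z)*(1+(1-z))/z^3 + b*(1-z)/z^2 + c/z"
  using assms by (simp add: field_simps power2_eq_square power3_eq_cube)

lemma sums_quad:
  fixes y a b c :: real assumes y: "\<bar>y\<bar> < 1"
  shows "(\<lambda>k. (a * real k ^ 2 + b * real k + c) * y ^ k) sums
           (a * y * (1 + y) / (1 - y) ^ 3 + b * y / (1 - y) ^ 2 + c / (1 - y))"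
proof -
  have y1: "1 - y \<noteq> 0" using y by auto
  define A where "A = a / (1 - y)"
  define B where "B = (b + 2 * A * y) / (1 - y)"
  define C where "C = (c + y * (A + B)) / (1 - y)"
  define H where "H n = (A * real n ^ 2 + B * real n + C) * y ^ n" for n
  have t2: "(\<lambda>n. real n ^ 2 * y ^ n) \<longlonglongrightarrow> 0" by (rule n2_pow_tendsto[OF y])
  have t1: "(\<lambda>n. real n * y ^ n) \<longlonglongrightarrow> 0" using powser_times_n_limit_0[of y] y by simp
  have t0: "(\<lambda>n. y ^ n) \<longlonglongrightarrow> 0" using y by (simp add: LIMSEQ_abs_realpow_zero2)
  have "(\<lambda>n. A * (real n ^ 2 * y ^ n) + B * (real n * y ^ n) + C * y ^ n) \<longlonglongrightarrow> A * 0 + B * 0 + C * 0"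
    by (intro tendsto_intros t0 t1 t2)
  moreover have "H = (\<lambda>n. A * (real n ^ 2 * y ^ n) + B * (real n * y ^ n) + C * y ^ n)"
    by (simp add: H_def fun_eq_iff algebra_simps)
  ultimately have HL: "H \<longlonglongrightarrow> 0" by simp
  have eqA: "A * (1 - y) = a" "B * (1 - y) = b + 2 * A * y" "C * (1 - y) = c + y * (A + B)"
    using y1 by (simp_all add: A_def B_def C_def)
  have "H n - H (Suc n) = y ^ n * ((A * (1 - y)) * real n ^ 2 + (B * (1 - y) - 2 * A * y) * real n
      + (C * (1 - y) - y * (A + B)))" for n
    by (simp add: H_def algebra_simps power2_eq_square)
  then have "H n - H (Suc n) = (a * real n ^ 2 + b * real n + c) * y ^ n" for n
    by (simp add: eqA)
  then have "(\<lambda>k. (a * real k ^ 2 + b * real k + c) * y ^ k) sums (H 0 - 0)"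
    using telescope_sums'[OF HL] by simp
  moreover have "H 0 = a * y * (1 + y) / (1 - y) ^ 3 + b * y / (1 - y) ^ 2 + c / (1 - y)"
  proof -
    define z where "z = 1 - y"
    have z: "z \<noteq> 0" using y1 by (simp add: z_def)
    have "H 0 = (c + y * (a / z + (b + 2 * (a / z) * y) / z)) / z"
      unfolding H_def A_def B_def C_def z_def by simp
    also have "\<dots> = a * y * (1 + y) / z ^ 3 + b * y / z ^ 2 + c / z"
      using sums_quad_aux[OF z, of c a b] by (simp add: z_def)
    finally show ?thesis by (simp add: z_def)
  qed
  ultimately show ?thesis by simp
qed

lemma beta_nat:
  "((\<lambda>t::real. t ^ k * (1 - t) ^ (2 * k)) has_integral (fact k * fact (2 * k) / fact (3 * k + 1))) {0..1}"
proof -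
  have "((\<lambda>t. t powr (real k + 1 - 1) * (1 - t) powr (real (2 * k) + 1 - 1)) has_integral
          Beta (real k + 1) (real (2 * k) + 1)) {0..1}"
    by (rule has_integral_Beta_real) auto
  moreover have "Beta (real k + 1) (real (2 * k) + 1) = fact k * fact (2 * k) / fact (3 * k + 1)"
  proof -
    have e: "real k + 1 + (real (2 * k) + 1) = 1 + real (3 * k + 1)" by simp
    have g1: "Gamma (real k + 1) = fact k" using Gamma_fact[of k] by (simp add: add.commute)
    have g2: "Gamma (real (2*k) + 1) = fact (2*k)" using Gamma_fact[of "2*k"] by (simp add: add.commute)
    have g3: "Gamma (1 + real (3*k+1)) = fact (3*k+1)" using Gamma_fact[of "3*k+1"] by simp
    show ?thesis unfolding Beta_def e g1 g2 g3 by simp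
  qed
  ultimately have I: "((\<lambda>t. t powr (real k) * (1 - t) powr (real (2 * k))) has_integral
          (fact k * fact (2 * k) / fact (3 * k + 1))) {0..1}" by simp
  show ?thesis
  proof (subst has_integral_spike_finite_eq[of "{0,1}"])
    show "finite {0::real, 1}" by simp
    show "t powr (real k) * (1 - t) powr (real (2 * k)) = t ^ k * (1 - t) ^ (2 * k)"
      if "t \<in> {0..1} - {0, 1}" for t
      using that powr_realpow[of t k] powr_realpow[of "1-t" "2*k"] by simp
    show "((\<lambda>t. t powr (real k) * (1 - t) powr (real (2 * k))) has_integral
          (fact k * fact (2 * k) / fact (3 * k + 1))) {0..1}" by (rule I)
  qed
qed



definition gf :: "real \<Rightarrow> real \<Rightarrow> real \<Rightarrow> real \<Rightarrow> real" where
  "gf u al be t = (let y = u * t * (1 - t) ^ 2 in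
     (3 * al) * y * (1 + y) / (1 - y) ^ 3 + (al + 3 * be) * y / (1 - y) ^ 2 + be / (1 - y))"

lemma t1t2_bound: fixes t :: real assumes "0 \<le> t" "t \<le> 1"
  shows "0 \<le> t * (1 - t) ^ 2" "t * (1 - t) ^ 2 \<le> 4 / 27"
proof -
  show "0 \<le> t * (1 - t) ^ 2" using assms by simp
  have "4 - 27 * (t * (1 - t) ^ 2) = (1 - 3 * t) ^ 2 * (4 - 3 * t)"
    by (simp add: algebra_simps power2_eq_square)
  moreover have "(1 - 3 * t) ^ 2 * (4 - 3 * t) \<ge> 0" using assms by simp
  ultimately show "t * (1 - t) ^ 2 \<le> 4 / 27" by linarith
qed

lemma term_integral:
  fixes u al be :: real
  shows "((\<lambda>t. (3 * al * real k ^ 2 + (al + 3 * be) * real k + be) * (u * t * (1 - t) ^ 2) ^ k)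
     has_integral ((al * real k + be) * u ^ k / real ((3 * k) choose k))) {0..1}"
proof -
  have I: "((\<lambda>t. ((3 * al * real k ^ 2 + (al + 3 * be) * real k + be) * u ^ k) * (t ^ k * (1 - t) ^ (2 * k)))
     has_integral (((3 * al * real k ^ 2 + (al + 3 * be) * real k + be) * u ^ k) *
        (fact k * fact (2 * k) / fact (3 * k + 1)))) {0..1}"
    by (intro has_integral_mult_right beta_nat)
  have f: "(fact (3 * k + 1) :: real) = (3 * real k + 1) * fact (3 * k)"
    by (simp add: fact_Suc[of "3*k", simplified] algebra_simps)
  have b: "real ((3 * k) choose k) = fact (3 * k) / (fact k * fact (2 * k))"
    using binomial_fact[of k "3*k"] by (simp add: mult_2)
  have e: "((3 * al * real k ^ 2 + (al + 3 * be) * real k + be) * u ^ k) *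
        (fact k * fact (2 * k) / fact (3 * k + 1)) = (al * real k + be) * u ^ k / real ((3 * k) choose k)"
  proof -
    have p: "3 * al * real k ^ 2 + (al + 3 * be) * real k + be = (al * real k + be) * (3 * real k + 1)"
      by (simp add: algebra_simps power2_eq_square)
    have nz: "(fact (3 * k) :: real) \<noteq> 0" "(fact k :: real) \<noteq> 0" "(fact (2 * k) :: real) \<noteq> 0"
      "3 * real k + 1 \<noteq> 0" by auto
    have gen: "\<And>F A B m c U :: real. F \<noteq> 0 \<Longrightarrow> A \<noteq> 0 \<Longrightarrow> B \<noteq> 0 \<Longrightarrow> m \<noteq> 0 \<Longrightarrow>
        (c * m * U) * (A * B / (m * F)) = c * U / (F / (A * B))"
      by (simp add: field_simps)
    show ?thesis unfolding f b p by (rule gen) (use nz in auto)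
  qed
  have "(u * t * (1 - t) ^ 2) ^ k = u ^ k * (t ^ k * (1 - t) ^ (2 * k))" for t
    by (simp add: power_mult_distrib power_mult)
  then show ?thesis using I unfolding e by (simp add: mult.assoc)
qed

lemma main_series:
  fixes u al be :: real and G :: "real \<Rightarrow> real"
  assumes u: "\<bar>u\<bar> * 4 / 27 < 1"
    and G: "\<And>t. t \<in> {0..1} \<Longrightarrow> (G has_real_derivative gf u al be t) (at t within {0..1})"
  shows "(\<lambda>k. (al * real k + be) * u ^ k / real ((3 * k) choose k)) sums (G 1 - G 0)"
proof -
  define f where "f k t = (3 * al * real k ^ 2 + (al + 3 * be) * real k + be) * (u * t * (1 - t) ^ 2) ^ k" for k t
  define r where "r = \<bar>u\<bar> * 4 / 27"
  define M where "M k = (3 * \<bar>al\<bar> * real k ^ 2 + (\<bar>al\<bar> + 3 * \<bar>be\<bar>) * real k + \<bar>be\<bar>) * r ^ k" for k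
  have r: "0 \<le> r" "r < 1" using u by (auto simp: r_def)
  have sumM: "summable M"
    using sums_quad[of r "3 * \<bar>al\<bar>" "\<bar>al\<bar> + 3 * \<bar>be\<bar>" "\<bar>be\<bar>"] r
    unfolding M_def by (auto simp: sums_iff)
  have ybound: "\<bar>u * t * (1 - t) ^ 2\<bar> \<le> r" if "t \<in> {0..1}" for t
  proof -
    have "\<bar>u * t * (1 - t) ^ 2\<bar> = \<bar>u\<bar> * (t * (1 - t) ^ 2)"
      using that t1t2_bound(1)[of t] by (simp add: abs_mult)
    also have "\<dots> \<le> \<bar>u\<bar> * (4 / 27)"
      using that t1t2_bound(2)[of t] by (intro mult_left_mono) auto
    finally show ?thesis by (simp add: r_def)
  qed
  have bound: "norm (f k t) \<le> M k" if "t \<in> {0..1}" for k t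
  proof -
    have p: "\<bar>3 * al * real k ^ 2 + (al + 3 * be) * real k + be\<bar> \<le>
        3 * \<bar>al\<bar> * real k ^ 2 + (\<bar>al\<bar> + 3 * \<bar>be\<bar>) * real k + \<bar>be\<bar>"
    proof -
      have "\<bar>3 * al * real k ^ 2 + (al + 3 * be) * real k + be\<bar> \<le>
          \<bar>3 * al * real k ^ 2\<bar> + \<bar>(al + 3 * be) * real k\<bar> + \<bar>be\<bar>" by linarith
      also have "\<dots> \<le> 3 * \<bar>al\<bar> * real k ^ 2 + (\<bar>al\<bar> + 3 * \<bar>be\<bar>) * real k + \<bar>be\<bar>"
        by (simp add: abs_mult mult_right_mono)
      finally show ?thesis .
    qed
    have q: "\<bar>u * t * (1 - t) ^ 2\<bar> ^ k \<le> r ^ k"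
      using ybound[OF that] by (intro power_mono) auto
    define y where "y = u * t * (1 - t) ^ 2"
    have "norm (f k t) = \<bar>3 * al * real k ^ 2 + (al + 3 * be) * real k + be\<bar> * \<bar>y\<bar> ^ k"
      unfolding f_def y_def[symmetric] by (simp add: abs_mult power_abs)
    also have "\<dots> \<le> M k" unfolding M_def y_def
      by (intro mult_mono p q) auto
    finally show ?thesis .
  qed
  have unif: "uniform_limit {0..1} (\<lambda>n t. \<Sum>i<n. f i t) (\<lambda>t. suminf (\<lambda>i. f i t)) sequentially"
    by (rule Weierstrass_m_test[OF bound sumM])
  have cont: "continuous_on {0..1} (\<lambda>t. \<Sum>i<n. f i t)" for n
    unfolding f_def by (intro continuous_intros)
  obtain I J where I: "\<And>n. ((\<lambda>t. \<Sum>i<n. f i t) has_integral I n) {0..1}"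
    and J: "((\<lambda>t. suminf (\<lambda>i. f i t)) has_integral J) {0..1}" and lim: "I \<longlonglongrightarrow> J"
    using uniform_limit_integral[OF unif cont] by auto
  have In: "I n = (\<Sum>k<n. (al * real k + be) * u ^ k / real ((3 * k) choose k))" for n
  proof -
    have "((\<lambda>t. \<Sum>k<n. f k t) has_integral (\<Sum>k<n. (al * real k + be) * u ^ k / real ((3 * k) choose k))) {0..1}"
      by (intro has_integral_sum) (auto simp: f_def term_integral)
    then show ?thesis using I[of n] by (rule has_integral_unique[rotated])
  qed
  have sum_eq: "suminf (\<lambda>i. f i t) = gf u al be t" if "t \<in> {0..1}" for t
  proof -
    have "\<bar>u * t * (1 - t) ^ 2\<bar> < 1" using ybound[OF that] r by linarith
    from sums_quad[OF this, of "3 * al" "al + 3 * be" be]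
    show ?thesis unfolding f_def gf_def Let_def by (simp add: sums_iff)
  qed
  have "(gf u al be has_integral G 1 - G 0) {0..1}"
    by (rule fundamental_theorem_of_calculus)
       (auto simp: has_real_derivative_iff_has_vector_derivative[symmetric] intro!: G)
  then have "((\<lambda>t. suminf (\<lambda>i. f i t)) has_integral G 1 - G 0) {0..1}"
    by (rule has_integral_eq[rotated]) (simp add: sum_eq)
  then have "J = G 1 - G 0" using J by (rule has_integral_unique[rotated])
  moreover have "I = (\<lambda>n. \<Sum>k<n. (al * real k + be) * u ^ k / real ((3 * k) choose k))"
    using In by auto
  ultimately show ?thesis unfolding sums_def using lim by simp
qed



definition "Qp x t = (x - 1) - x^3 * t * (1 - t)^2" for x t :: real
definition "dQp x t = (-1) * x^3 * (1 - t) * (1 - 3 * t)" for x t :: real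
definition "qq x t = x^2 * t^2 - x * (x + 1) * t + 1" for x t :: real
definition "dqq x t = 2 * x^2 * t - x * (x + 1)" for x t :: real
definition "P2 x t = ((x-1)*(-81+243*x-189*x^2+81*x^3-48*x^4-2*x^5))*t^0 + (x^3*(486-1128*x+694*x^2+2*x^3-96*x^4+14*x^5))*t^1 + (x^3*(-756+1836*x-1188*x^2-108*x^3+396*x^4-60*x^5))*t^2 + (x^3*(324-810*x+540*x^2+270*x^3-612*x^4+96*x^5))*t^3 + (x^6*(-216+420*x-68*x^2))*t^4 + (x^6*(54-108*x+18*x^2))*t^5" for x t :: real
definition "dN2 x t = (x - 1) * (1*((x-1)*(-81+243*x-189*x^2+81*x^3-48*x^4-2*x^5))*t^0 + 2*(x^3*(486-1128*x+694*x^2+2*x^3-96*x^4+14*x^5))*t^1 + 3*(x^3*(-756+1836*x-1188*x^2-108*x^3+396*x^4-60*x^5))*t^2 + 4*(x^3*(324-810*x+540*x^2+270*x^3-612*x^4+96*x^5))*t^3 + 5*(x^6*(-216+420*x-68*x^2))*t^4 + 6*(x^6*(54-108*x+18*x^2))*t^5)" for x t :: real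
definition "P1 x t = ((x-1)*(-27+27*x^2+18*x^3-2*x^4))*t^0 + (x^3*(162-110*x-52*x^2+18*x^3+14*x^4))*t^1 + (x^3*(-252+144*x+108*x^2-72*x^3-60*x^4))*t^2 + (x^3*(108-54*x-54*x^2+108*x^3+96*x^4))*t^3 + (x^6*(-72-68*x))*t^4 + (18*x^6*(x+1))*t^5" for x t :: real
definition "dN1 x t = (x - 1) * (1*((x-1)*(-27+27*x^2+18*x^3-2*x^4))*t^0 + 2*(x^3*(162-110*x-52*x^2+18*x^3+14*x^4))*t^1 + 3*(x^3*(-252+144*x+108*x^2-72*x^3-60*x^4))*t^2 + 4*(x^3*(108-54*x-54*x^2+108*x^3+96*x^4))*t^3 + 5*(x^6*(-72-68*x))*t^4 + 6*(18*x^6*(x+1))*t^5)" for x t :: real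

lemma ident2: "(x - 1) * (3 * s_fun x * (x^3 * t * (1 - t)^2) * (x - 1 + x^3 * t * (1 - t)^2)
    + (s_fun x + 3 * t_fun x) * (x^3 * t * (1 - t)^2) * Qp x t + t_fun x * (Qp x t)^2)
  = dN2 x t * Qp x t - 2 * ((x - 1) * t * P2 x t) * dQp x t
    - (Qp x t)^2 * ((-8 * x^2 * (1 - x)) * x * qq x t + (4 * x^2 * (1 - x)) * dqq x t * (1 - x + x * t))"
  unfolding Qp_def dQp_def qq_def dqq_def P2_def dN2_def s_fun_def t_fun_def by algebra

lemma ident1: "(x + 3)^2 * ((x - 1) * (3 * (2*x - 3)^2 * (x^3 * t * (1 - t)^2) * (x - 1 + x^3 * t * (1 - t)^2)
    + ((2*x - 3)^2 + 3 * (2*x^2 + 2*x - 3)) * (x^3 * t * (1 - t)^2) * Qp x t + (2*x^2 + 2*x - 3) * (Qp x t)^2))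
  = dN1 x t * Qp x t - 2 * ((x - 1) * t * P1 x t) * dQp x t
    - (Qp x t)^2 * (4 * x^3 * (x - 1) * (1 - x + x * t))"
  unfolding Qp_def dQp_def qq_def dqq_def P1_def dN1_def by algebra

lemma P2_one: "P2 x 1 = 27 * (x - 1)^2 * (x^2 - 6*x + 3)"
  unfolding P2_def power_one power_0 mult_1_right by algebra

lemma P1_one: "P1 x 1 = (x - 1) * (-2 * x^3 * (x + 7) + (2*x^2 + 2*x - 3) * (x + 3)^2)"
  unfolding P1_def power_one power_0 mult_1_right by algebra

lemma Qp_factor: "Qp x t = - ((1 - x + x * t) * qq x t)"
  unfolding Qp_def qq_def by algebra

lemma qq4: "4 * qq x t = (1 - x) * (3 + x) + (2 * x * t - x - 1)^2"
  unfolding qq_def by algebra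



definition "N2 x t = (x - 1) * t * P2 x t" for x t :: real
definition "N1 x t = (x - 1) * t * P1 x t" for x t :: real

lemma N2_deriv: "(N2 x has_real_derivative dN2 x t) (at t within S)"
  unfolding N2_def[abs_def] P2_def dN2_def
  by (rule derivative_eq_intros refl)+ (simp add: eval_nat_numeral; algebra)

lemma N1_deriv: "(N1 x has_real_derivative dN1 x t) (at t within S)"
  unfolding N1_def[abs_def] P1_def dN1_def
  by (rule derivative_eq_intros refl)+ (simp add: eval_nat_numeral; algebra)

lemma Qp_deriv: "(Qp x has_real_derivative dQp x t) (at t within S)"
  unfolding Qp_def[abs_def] dQp_def
  by (rule derivative_eq_intros refl)+ (simp add: eval_nat_numeral; algebra)

lemma qq_deriv: "(qq x has_real_derivative dqq x t) (at t within S)"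
  unfolding qq_def[abs_def] dqq_def
  by (rule derivative_eq_intros refl)+ (simp add: eval_nat_numeral; algebra)

lemma L_pos: fixes x t :: real assumes "x < 1" "0 \<le> t" "t \<le> 1" shows "0 < 1 - x + x * t"
proof (cases "x \<ge> 0")
  case True then have "x * t \<ge> 0" using assms by simp
  then show ?thesis using assms by linarith
next
  case False then have "x * (1 - t) \<le> 0" using assms by (simp add: mult_nonpos_nonneg)
  then show ?thesis by (simp add: algebra_simps)
qed

lemma qq_pos: fixes x t :: real assumes "-3 < x" "x < 1" shows "0 < qq x t"
proof -
  have "0 < (1 - x) * (3 + x)" using assms by simp
  then have "0 < 4 * qq x t" unfolding qq4 by (smt (verit) zero_le_power2)
  then show ?thesis by simp
qed

lemma Qp_neg: fixes x t :: real assumes "-3 < x" "x < 1" "0 \<le> t" "t \<le> 1" shows "Qp x t < 0"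
  unfolding Qp_factor using L_pos[of x t] qq_pos[of x t] assms by simp

lemma G2_deriv:
  fixes x t :: real assumes "-3 < x" "x < 1" "0 \<le> t" "t \<le> 1"
  shows "((\<lambda>t. N2 x t / (Qp x t)^2 + (-8 * x^2 * (1 - x)) * ln (1 - x + x * t) + (4 * x^2 * (1 - x)) * ln (qq x t))
    has_real_derivative
     ((dN2 x t * (Qp x t)^2 - N2 x t * (2 * Qp x t * dQp x t)) / ((Qp x t)^2)^2
      + (-8 * x^2 * (1 - x)) * (x / (1 - x + x * t)) + (4 * x^2 * (1 - x)) * (dqq x t / qq x t))) (at t within S)"
  using L_pos[OF assms(2-4)] qq_pos[OF assms(1,2), of t] Qp_neg[OF assms]
  by (auto intro!: derivative_eq_intros N2_deriv Qp_deriv qq_deriv simp: mult_ac)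



lemma gf_gen:
  fixes m Y al be :: real assumes "m \<noteq> 0" "m - Y \<noteq> 0"
  shows "3 * al * (Y / m) * (1 + Y / m) / (1 - Y / m) ^ 3 + (al + 3 * be) * (Y / m) / (1 - Y / m) ^ 2 + be / (1 - Y / m)
    = m * (3 * al * Y * (m + Y) + (al + 3 * be) * Y * (m - Y) + be * (m - Y) ^ 2) / (m - Y) ^ 3"
proof -
  define z where "z = m - Y"
  have z: "z \<noteq> 0" using assms by (simp add: z_def)
  have e: "1 - Y / m = z / m" using assms by (simp add: field_simps z_def)
  have "3 * al * (Y / m) * (1 + Y / m) / (z / m) ^ 3 + (al + 3 * be) * (Y / m) / (z / m) ^ 2 + be / (z / m)
    = m * (3 * al * Y * (m + Y) + (al + 3 * be) * Y * z + be * z ^ 2) / z ^ 3"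
    using assms(1) z by (simp add: field_simps power2_eq_square power3_eq_cube)
  then show ?thesis unfolding e z_def .
qed

lemma gf_Qp:
  fixes x t al be :: real assumes "x \<noteq> 1" "Qp x t \<noteq> 0"
  shows "gf (x^3 / (x - 1)) al be t = (x - 1) * (3 * al * (x^3 * t * (1 - t)^2) * (x - 1 + x^3 * t * (1 - t)^2)
    + (al + 3 * be) * (x^3 * t * (1 - t)^2) * Qp x t + be * (Qp x t)^2) / (Qp x t)^3"
proof -
  have q: "Qp x t = (x - 1) - x^3 * t * (1 - t)^2" by (simp add: Qp_def)
  have u: "x^3 / (x - 1) * t * (1 - t)^2 = (x^3 * t * (1 - t)^2) / (x - 1)" by simp
  have m: "x - 1 \<noteq> 0" using assms by simp
  show ?thesis unfolding gf_def Let_def u q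
    using gf_gen[OF m, of "x^3 * t * (1 - t)^2" al be] assms(2) unfolding q by simp
qed

lemma frac_gen2:
  fixes Q L q a b c e f d x :: real
  assumes "Q = - (L * q)" "L \<noteq> 0" "q \<noteq> 0"
  shows "(a * Q^2 - b * (2 * Q * c)) / (Q^2)^2 + e * (x / L) + f * (d / q)
     = (a * Q - 2 * b * c - Q^2 * (e * x * q + f * d * L)) / Q^3"
  using assms by (simp add: field_simps power2_eq_square power3_eq_cube)

lemma G2_deriv_gf:
  fixes x t :: real assumes "-3 < x" "x < 1" "0 \<le> t" "t \<le> 1"
  shows "((\<lambda>t. N2 x t / (Qp x t)^2 + (-8 * x^2 * (1 - x)) * ln (1 - x + x * t) + (4 * x^2 * (1 - x)) * ln (qq x t))
    has_real_derivative gf (x^3 / (x - 1)) (s_fun x) (t_fun x) t) (at t within S)"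
proof -
  have L: "1 - x + x * t \<noteq> 0" using L_pos[OF assms(2-4)] by simp
  have q: "qq x t \<noteq> 0" using qq_pos[OF assms(1,2), of t] by simp
  have Q: "Qp x t \<noteq> 0" using Qp_neg[OF assms] by simp
  have "(dN2 x t * (Qp x t)^2 - N2 x t * (2 * Qp x t * dQp x t)) / ((Qp x t)^2)^2
      + (-8 * x^2 * (1 - x)) * (x / (1 - x + x * t)) + (4 * x^2 * (1 - x)) * (dqq x t / qq x t)
     = (dN2 x t * Qp x t - 2 * N2 x t * dQp x t - (Qp x t)^2 * ((-8 * x^2 * (1 - x)) * x * qq x t + (4 * x^2 * (1 - x)) * dqq x t * (1 - x + x * t))) / (Qp x t)^3"
    by (rule frac_gen2[OF Qp_factor L q])
  also have "\<dots> = (x - 1) * (3 * s_fun x * (x^3 * t * (1 - t)^2) * (x - 1 + x^3 * t * (1 - t)^2)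
    + (s_fun x + 3 * t_fun x) * (x^3 * t * (1 - t)^2) * Qp x t + t_fun x * (Qp x t)^2) / (Qp x t)^3"
    by (simp only: N2_def ident2[symmetric])
  also have "\<dots> = gf (x^3 / (x - 1)) (s_fun x) (t_fun x) t"
    using gf_Qp[OF _ Q] assms(2) by simp
  finally show ?thesis using G2_deriv[OF assms, of S] by simp
qed



lemma arc_alg:
  fixes s x q K :: real assumes "s > 0" "K \<noteq> 0" "q \<noteq> 0"
  shows "(8 * x^2 * (x - 1) / (K * s)) * (inverse (4 * q / (s * s)) * (2 * x / s)) = 4 * x^3 * (x - 1) / (K * q)"
  using assms by (simp add: field_simps power2_eq_square power3_eq_cube)

lemma arc_deriv:
  fixes x t :: real assumes "-3 < x" "x < 1"
  shows "((\<lambda>t. (8 * x^2 * (x - 1) / ((x + 3)^2 * sqrt ((1 - x) * (3 + x)))) * arctan ((2 * x * t - x - 1) / sqrt ((1 - x) * (3 + x))))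
    has_real_derivative (4 * x^3 * (x - 1) / ((x + 3)^2 * qq x t))) (at t within S)"
proof -
  define D where "D = (1 - x) * (3 + x)"
  have D: "0 < D" using assms by (simp add: D_def)
  have sD: "sqrt D ^ 2 = D" "0 < sqrt D" using D by auto
  have h: "1 + ((2 * x * t - x - 1) / sqrt D)^2 = 4 * qq x t / D"
    using D unfolding qq4 D_def[symmetric] by (simp add: power_divide sD field_simps)
  have x3: "(x + 3)^2 \<noteq> 0" using assms by simp
  have q: "qq x t \<noteq> 0" using qq_pos[OF assms, of t] by simp
  have A: "((\<lambda>t. (2 * x * t - x - 1) / sqrt D) has_real_derivative (2 * x / sqrt D)) (at t within S)"
  proof -
    have dd: "sqrt D * sqrt D = \<bar>D\<bar>" by simp
    have e: "2 * x * sqrt D / \<bar>D\<bar> = 2 * x / sqrt D"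
      unfolding dd[symmetric] using sD(2) by (rule mult_divide_mult_cancel_right[OF less_imp_neq[symmetric]])
    have e': "2 * x * sqrt D / D = 2 * x / sqrt D" using e D by simp
    show ?thesis using D by (auto intro!: derivative_eq_intros simp: e')
  qed
  have B: "((\<lambda>t. arctan ((2 * x * t - x - 1) / sqrt D)) has_real_derivative
      (inverse (1 + ((2 * x * t - x - 1) / sqrt D)^2) * (2 * x / sqrt D))) (at t within S)"
    by (rule DERIV_chain2[OF DERIV_arctan A])
  have C: "((\<lambda>t. (8 * x^2 * (x - 1) / ((x + 3)^2 * sqrt D)) * arctan ((2 * x * t - x - 1) / sqrt D)) has_real_derivative
      (8 * x^2 * (x - 1) / ((x + 3)^2 * sqrt D)) * (inverse (1 + ((2 * x * t - x - 1) / sqrt D)^2) * (2 * x / sqrt D))) (at t within S)"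
    by (rule DERIV_cmult[OF B])
  have E: "(8 * x^2 * (x - 1) / ((x + 3)^2 * sqrt D)) * (inverse (1 + ((2 * x * t - x - 1) / sqrt D)^2) * (2 * x / sqrt D))
     = 4 * x^3 * (x - 1) / ((x + 3)^2 * qq x t)"
  proof -
    have dd: "4 * qq x t / D = 4 * qq x t / (sqrt D * sqrt D)" using D by simp
    show ?thesis unfolding h dd by (rule arc_alg[OF sD(2) x3 q])
  qed
  from C[unfolded E] show ?thesis by (simp only: D_def)
qed

lemma frac_gen1:
  fixes Q L q a b c m K :: real
  assumes "Q = - (L * q)" "L \<noteq> 0" "q \<noteq> 0" "K \<noteq> 0"
  shows "(a * (K * Q^2) - b * (K * (2 * (c * Q)))) / ((K * Q^2) * (K * Q^2)) + m / (K * q)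
     = ((a * Q - 2 * b * c - Q^2 * (m * L)) / K) / Q^3"
  using assms by (simp add: field_simps power2_eq_square power3_eq_cube)

lemma G1_deriv_gf:
  fixes x t :: real assumes "-3 < x" "x < 1" "0 \<le> t" "t \<le> 1"
  shows "((\<lambda>t. N1 x t / ((x + 3)^2 * (Qp x t)^2) + (8 * x^2 * (x - 1) / ((x + 3)^2 * sqrt ((1 - x) * (3 + x)))) * arctan ((2 * x * t - x - 1) / sqrt ((1 - x) * (3 + x))))
    has_real_derivative gf (x^3 / (x - 1)) ((2*x - 3)^2) (2*x^2 + 2*x - 3) t) (at t within S)"
proof -
  have L: "1 - x + x * t \<noteq> 0" using L_pos[OF assms(2-4)] by simp
  have q: "qq x t \<noteq> 0" using qq_pos[OF assms(1,2), of t] by simp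
  have Q: "Qp x t \<noteq> 0" using Qp_neg[OF assms] by simp
  have K: "(x + 3)^2 \<noteq> 0" using assms by simp
  have d1: "((\<lambda>t. N1 x t / ((x + 3)^2 * (Qp x t)^2)) has_real_derivative
     (dN1 x t * ((x + 3)^2 * (Qp x t)^2) - N1 x t * ((x + 3)^2 * (2 * (dQp x t * Qp x t)))) / (((x + 3)^2 * (Qp x t)^2) * ((x + 3)^2 * (Qp x t)^2))) (at t within S)"
    using DERIV_divide[OF N1_deriv[of x t S] DERIV_cmult[OF DERIV_power[OF Qp_deriv[of x t S], where n=2], where c="(x + 3)^2"]] Q K
    by simp
  have "(dN1 x t * ((x + 3)^2 * (Qp x t)^2) - N1 x t * ((x + 3)^2 * (2 * (dQp x t * Qp x t)))) / (((x + 3)^2 * (Qp x t)^2) * ((x + 3)^2 * (Qp x t)^2))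
      + 4 * x^3 * (x - 1) / ((x + 3)^2 * qq x t)
     = ((dN1 x t * Qp x t - 2 * N1 x t * dQp x t - (Qp x t)^2 * (4 * x^3 * (x - 1) * (1 - x + x * t))) / (x + 3)^2) / (Qp x t)^3"
    by (rule frac_gen1[OF Qp_factor L q K])
  also have "\<dots> = (((x + 3)^2 * ((x - 1) * (3 * (2*x - 3)^2 * (x^3 * t * (1 - t)^2) * (x - 1 + x^3 * t * (1 - t)^2)
    + ((2*x - 3)^2 + 3 * (2*x^2 + 2*x - 3)) * (x^3 * t * (1 - t)^2) * Qp x t + (2*x^2 + 2*x - 3) * (Qp x t)^2))) / (x + 3)^2) / (Qp x t)^3"
    by (simp only: N1_def ident1)
  also have "\<dots> = (x - 1) * (3 * (2*x - 3)^2 * (x^3 * t * (1 - t)^2) * (x - 1 + x^3 * t * (1 - t)^2)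
    + ((2*x - 3)^2 + 3 * (2*x^2 + 2*x - 3)) * (x^3 * t * (1 - t)^2) * Qp x t + (2*x^2 + 2*x - 3) * (Qp x t)^2) / (Qp x t)^3"
    using K by simp
  also have "\<dots> = gf (x^3 / (x - 1)) ((2*x - 3)^2) (2*x^2 + 2*x - 3) t"
    using gf_Qp[OF _ Q] assms(2) by simp
  finally show ?thesis using DERIV_add[OF d1 arc_deriv[OF assms(1,2), of t S]] by simp
qed



lemma c_const_cubic: "4 * c_const^3 + 27 * c_const - 27 = 0"
proof -
  define a where "a = (1 + sqrt 2) powr (1/3)"
  have p: "(0::real) < 1 + sqrt 2" by (simp add: add_pos_nonneg)
  have a0: "a > 0" using p by (simp add: a_def)
  have a3: "a ^ 3 = 1 + sqrt 2"
  proof -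
    have "a ^ 3 = a powr (real 3)" by (rule powr_realpow[OF a0, symmetric])
    also have "\<dots> = (1 + sqrt 2) powr (1/3 * real 3)" unfolding a_def by (rule powr_powr)
    also have "1/3 * real 3 = 1" by simp
    finally show ?thesis using p by (simp only: powr_one_gt_zero_iff powr_one)
  qed
  have ai: "(1 + sqrt 2) powr (-(1/3)) = 1 / a" unfolding a_def powr_minus inverse_eq_divide ..
  have c: "c_const = 3/2 * (a - 1 / a)" unfolding c_const_def ai unfolding a_def ..
  have i3: "1 / (1 + sqrt 2) = sqrt 2 - 1"
  proof -
    have h: "(sqrt 2 - 1) * (1 + sqrt 2) = 1" by (simp add: algebra_simps)
    show ?thesis using p by (simp add: divide_eq_eq h)
  qed
  have gw: "\<And>a b :: real. a * b = 1 \<Longrightarrow> (a - b)^3 + 3 * (a - b) = a^3 - b^3" by algebra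
  have ab1: "a * (1 / a) = 1" using a0 by simp
  have w: "(a - 1/a)^3 + 3 * (a - 1/a) = a^3 - (1/a)^3" by (rule gw[OF ab1])
  have "(a - 1/a)^3 + 3 * (a - 1/a) = 2" unfolding w a3 power_one_over i3 by simp
  moreover have "4 * (3/2 * w)^3 + 27 * (3/2 * w) - 27 = 0" if "w^3 + 3 * w = 2" for w :: real
  proof -
    have "(3/2 * w)^3 = 27/8 * w^3" by (simp add: power3_eq_cube)
    then show ?thesis using that by linarith
  qed
  ultimately show ?thesis unfolding c by blast
qed

lemma c_const_bound:
  fixes x :: real assumes "-3 < x" "x < c_const"
  shows "x < 1" "\<bar>x^3 / (x - 1)\<bar> * 4 / 27 < 1"
proof -
  have cc: "4 * c_const^3 + 27 * c_const - 27 = 0" by (rule c_const_cubic)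
  have c1: "c_const < 1"
  proof (rule ccontr)
    assume "\<not> c_const < 1"
    then have "c_const \<ge> 1" by simp
    then have "c_const ^ 3 \<ge> 1" by simp
    then show False using cc \<open>c_const \<ge> 1\<close> by linarith
  qed
  show x1: "x < 1" using assms c1 by simp
  have "4 * \<bar>x\<bar>^3 < 27 * (1 - x)"
  proof (cases "x \<ge> 0")
    case True
    then have "x ^ 3 < c_const ^ 3" using assms by (intro power_strict_mono) auto
    then show ?thesis using True cc assms by simp
  next
    case False
    have "0 < (x + 3) * (2 * x - 3)^2" using assms False by (intro mult_pos_pos) auto
    moreover have "(x + 3) * (2 * x - 3)^2 = 4 * x^3 - 27 * x + 27" by (simp add: algebra_simps power2_eq_square power3_eq_cube)
    moreover have "\<bar>x\<bar>^3 = - (x^3)" using False by (simp add: power3_eq_cube)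
    moreover have "27 * (1 - x) = 27 - 27 * x" by simp
    ultimately show ?thesis by linarith
  qed
  then have h: "\<bar>x\<bar>^3 / (1 - x) < 27 / 4" using x1 by (simp add: pos_divide_less_eq)
  have e: "\<bar>x^3 / (x - 1)\<bar> = \<bar>x\<bar>^3 / (1 - x)" using x1 by (simp add: abs_div power_abs)
  have "\<bar>x^3 / (x - 1)\<bar> < 27 / 4" unfolding e by (rule h)
  moreover have gen: "\<And>A :: real. A < 27 / 4 \<Longrightarrow> A * 4 / 27 < 1" by linarith
  ultimately show "\<bar>x^3 / (x - 1)\<bar> * 4 / 27 < 1" by blast
qed

lemma cos_pos_range:
  fixes th :: real assumes "-pi < th" "th < pi" "0 < cos th"
  shows "-(pi/2) < th" "th < pi/2"
proof -
  show "th < pi/2"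
  proof (rule ccontr)
    assume "\<not> th < pi/2"
    then have "0 \<le> sin (th - pi/2)" using assms by (intro sin_ge_zero) auto
    moreover have "sin (th - pi/2) = - cos th" by (simp add: sin_diff)
    ultimately show False using assms by simp
  qed
  show "-(pi/2) < th"
  proof (rule ccontr)
    assume "\<not> -(pi/2) < th"
    then have "0 \<le> sin (-(th + pi/2))" using assms by (intro sin_ge_zero) auto
    moreover have "sin (-(th + pi/2)) = - cos th"
      unfolding sin_minus by (simp add: sin_add)
    ultimately show False using assms by simp
  qed
qed

lemma arctan_diff_cs:
  fixes a b :: real
  shows "cos (arctan a - arctan b) = (1 + a * b) / (sqrt (1 + a^2) * sqrt (1 + b^2))"
    "sin (arctan a - arctan b) = (a - b) / (sqrt (1 + a^2) * sqrt (1 + b^2))"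
  by (simp_all add: cos_diff sin_diff cos_arctan sin_arctan add_divide_distrib diff_divide_distrib)

lemma tan_arctan_diff: fixes a b :: real
  shows "tan (arctan a - arctan b) = (a - b) / (1 + a * b)"
proof -
  have pa: "0 < 1 + a^2" "0 < 1 + b^2" by (simp_all add: add_pos_nonneg)
  then have sp: "sqrt (1 + a^2) * sqrt (1 + b^2) \<noteq> 0" by simp
  have gen: "\<And>u v P :: real. P \<noteq> 0 \<Longrightarrow> (u / P) / (v / P) = u / v"
    by (case_tac "v = 0") (simp_all add: field_simps)
  show ?thesis unfolding tan_def arctan_diff_cs using gen[OF sp] by simp
qed

lemma arctan_diff_range: fixes a b :: real
  shows "-pi < arctan a - arctan b" "arctan a - arctan b < pi"
  using arctan_bounded[of a] arctan_bounded[of b] by linarith+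

lemma arctan_diff_pos:
  fixes a b :: real assumes "0 < 1 + a * b"
  shows "arctan a - arctan b = arctan ((a - b) / (1 + a * b))"
proof -
  let ?th = "arctan a - arctan b"
  have sp: "0 < sqrt (1 + a^2) * sqrt (1 + b^2)" by (simp add: add_pos_nonneg)
  have cp: "0 < cos ?th" unfolding arctan_diff_cs using assms sp by (rule divide_pos_pos)
  note r = cos_pos_range[OF arctan_diff_range cp]
  have "tan ?th = (a - b) / (1 + a * b)" by (rule tan_arctan_diff)
  then show ?thesis using r by (intro arctan_unique[symmetric]) auto
qed

lemma arctan_diff_neg:
  fixes a b :: real assumes "1 + a * b < 0" "a < b"
  shows "arctan a - arctan b = arctan ((a - b) / (1 + a * b)) - pi"
proof -
  let ?th = "arctan a - arctan b + pi"
  have sp: "0 < sqrt (1 + a^2) * sqrt (1 + b^2)" by (simp add: add_pos_nonneg)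
  have neg: "arctan a - arctan b < 0" using assms(2) by (simp add: arctan_less_iff)
  have "(1 + a * b) / (sqrt (1 + a^2) * sqrt (1 + b^2)) < 0" by (rule divide_neg_pos[OF assms(1) sp])
  then have cp: "0 < cos ?th" unfolding cos_periodic_pi arctan_diff_cs by linarith
  have rr: "-pi < ?th" "?th < pi" using neg arctan_diff_range[of a b] by linarith+
  note r = cos_pos_range[OF rr cp]
  have "tan ?th = tan (arctan a - arctan b)" by (rule tan_periodic_pi)
  also have "\<dots> = (a - b) / (1 + a * b)" by (rule tan_arctan_diff)
  finally have "tan ?th = (a - b) / (1 + a * b)" .
  then have "arctan ((a - b) / (1 + a * b)) = ?th" using r by (intro arctan_unique) auto
  then show ?thesis by simp
qed

lemma arctan_diff_zero:
  fixes a b :: real assumes "1 + a * b = 0" "a < b"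
  shows "arctan a - arctan b = - (pi / 2)"
proof -
  let ?th = "arctan a - arctan b"
  have neg: "?th < 0" using assms(2) by (simp add: arctan_less_iff)
  have c0: "cos ?th = 0" unfolding arctan_diff_cs assms(1) by simp
  have s0: "sin (?th + pi/2) = 0" using c0 by (simp add: sin_add)
  have l: "-pi < ?th + pi/2" "?th + pi/2 < pi" using neg arctan_diff_range[of a b] by linarith+
  have "?th + pi/2 = 0" by (rule sin_eq_0_pi[OF l s0])
  then show ?thesis by linarith
qed

lemma quo_alg:
  fixes s x :: real assumes "0 < s" "x < 1" "x \<noteq> -2"
  shows "(2 * x / s) / (2 * (1 - x) * (2 + x) / (s * s)) = x / (x + 2) * (s / (1 - x))"
proof -
  have gen: "\<And>p r. p \<noteq> 0 \<Longrightarrow> r \<noteq> 0 \<Longrightarrow> (2 * x / s) / (2 * p * r / (s * s)) = x / r * (s / p)"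
    using assms(1) by (simp add: field_simps)
  have "1 - x \<noteq> 0" "2 + x \<noteq> 0" using assms by auto
  from gen[OF this] show ?thesis by (simp add: add.commute)
qed

lemma q_fun_arctan:
  fixes x :: real assumes "-3 < x" "x < 1"
  shows "arctan ((x - 1) / sqrt ((1 - x) * (3 + x))) - arctan (- (x + 1) / sqrt ((1 - x) * (3 + x))) = q_fun x"
proof -
  define D where "D = (1 - x) * (3 + x)"
  have D: "0 < D" using assms by (simp add: D_def)
  have sD: "sqrt D * sqrt D = D" "0 < sqrt D" using D by simp_all
  define a where "a = (x - 1) / sqrt D"
  define b where "b = - (x + 1) / sqrt D"
  have ab0: "1 + a * b = (D - (x - 1) * (x + 1)) / D"
    unfolding a_def b_def using sD D by (simp add: field_simps)
  have ab: "1 + a * b = 2 * (1 - x) * (2 + x) / D"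
    unfolding ab0 by (simp add: D_def algebra_simps)
  have sq: "sqrt ((3 + x) / (1 - x)) = sqrt D / (1 - x)"
  proof -
    have "D = (1 - x)^2 * ((3 + x) / (1 - x))" using assms by (simp add: D_def power2_eq_square)
    then have "sqrt D = sqrt ((1 - x)^2) * sqrt ((3 + x) / (1 - x))" by (simp only: real_sqrt_mult)
    then have "sqrt D = (1 - x) * sqrt ((3 + x) / (1 - x))" using assms by simp
    then show ?thesis using assms by simp
  qed
  have amb: "a - b = 2 * x / sqrt D" unfolding a_def b_def by (simp add: diff_divide_distrib[symmetric])
  have quo: "(a - b) / (1 + a * b) = x / (x + 2) * sqrt ((3 + x) / (1 - x))" if "x \<noteq> -2"
  proof -
    have "(a - b) / (1 + a * b) = (2 * x / sqrt D) / (2 * (1 - x) * (2 + x) / (sqrt D * sqrt D))"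
      by (simp only: amb ab sD(1))
    also have "\<dots> = x / (x + 2) * (sqrt D / (1 - x))" by (rule quo_alg[OF sD(2) assms(2) that])
    finally show ?thesis by (simp only: sq)
  qed
  have lhs: "arctan ((x - 1) / sqrt ((1 - x) * (3 + x))) - arctan (- (x + 1) / sqrt ((1 - x) * (3 + x)))
      = arctan a - arctan b" by (simp add: a_def b_def D_def)
  have ab_lt: "a < b" if "x < 0" unfolding a_def b_def using that sD by (simp add: divide_strict_right_mono)
  consider "-2 < x" | "x = -2" | "x < -2" by linarith
  then show ?thesis
  proof cases
    case 1
    have "0 < 1 + a * b" unfolding ab using 1 assms D by simp
    then have "arctan a - arctan b = arctan ((a - b) / (1 + a * b))" by (rule arctan_diff_pos)
    also have "\<dots> = arctan (x / (x + 2) * sqrt ((3 + x) / (1 - x)))" using 1 quo by simp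
    also have "\<dots> = q_fun x" using 1 assms by (simp add: q_fun_def)
    finally show ?thesis unfolding lhs .
  next
    case 2
    have "1 + a * b = 0" unfolding ab using 2 by simp
    then have "arctan a - arctan b = - (pi / 2)" using ab_lt 2 by (intro arctan_diff_zero) auto
    also have "\<dots> = q_fun x" using 2 by (simp add: q_fun_def)
    finally show ?thesis unfolding lhs .
  next
    case 3
    have "2 * (1 - x) * (2 + x) < 0" using 3 assms by (simp add: mult_pos_neg)
    then have "1 + a * b < 0" unfolding ab using D by (simp add: divide_neg_pos)
    then have "arctan a - arctan b = arctan ((a - b) / (1 + a * b)) - pi" using ab_lt 3 by (intro arctan_diff_neg) auto
    also have "\<dots> = arctan (x / (x + 2) * sqrt ((3 + x) / (1 - x))) - pi" using 3 quo by simp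
    also have "\<dots> = q_fun x" using 3 assms by (simp add: q_fun_def)
    finally show ?thesis unfolding lhs .
  qed
qed



lemma term_conv:
  fixes x A :: real and k :: nat assumes "x < 1"
  shows "(A * x^(3*k)) / ((x - 1)^k * real ((3*k) choose k)) = A * (x^3 / (x - 1))^k / real ((3*k) choose k)"
proof -
  have "(x - 1)^k \<noteq> 0" using assms by simp
  moreover have "real ((3*k) choose k) \<noteq> 0" by simp
  moreover have "x^(3*k) = (x^3)^k" by (rule power_mult)
  ultimately show ?thesis by (simp add: power_divide field_simps)
qed

theorem theorem1p1:
  fixes x :: real
  assumes "-3 < x" and "x < c_const"
  shows "((\<lambda>n. let k = Suc n in
            (((2*x - 3)^2 * real k + 2*x^2 + 2*x - 3) * x^(3*k))
            / ((x - 1)^k * real ((3*k) choose k)))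
         sums (-2 * x^3 * (x + 7) / (x + 3)^2
               + 8 * x^2 * (x - 1) * q_fun x / ((x + 3)^2 * sqrt ((1 - x) * (3 + x)))))
       \<and> ((\<lambda>k. ((s_fun x * real k + t_fun x) * x^(3*k))
            / ((x - 1)^k * real ((3*k) choose k)))
         sums (12 * x^2 * (1 - x) * ln (1 - x) - 27 * (1 - x) * (x^2 - 6*x + 3)))"
proof
  have x1: "x < 1" and ub: "\<bar>x^3 / (x - 1)\<bar> * 4 / 27 < 1" using c_const_bound[OF assms] by auto
  have xm: "x - 1 \<noteq> 0" using x1 by simp
  have m3: "-3 < x" by (rule assms(1))
  show "(\<lambda>k. ((s_fun x * real k + t_fun x) * x^(3*k)) / ((x - 1)^k * real ((3*k) choose k)))
         sums (12 * x^2 * (1 - x) * ln (1 - x) - 27 * (1 - x) * (x^2 - 6*x + 3))"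
  proof -
    define G where "G t = N2 x t / (Qp x t)^2 + (-8 * x^2 * (1 - x)) * ln (1 - x + x * t) + (4 * x^2 * (1 - x)) * ln (qq x t)" for t
    have dG: "(G has_real_derivative gf (x^3 / (x - 1)) (s_fun x) (t_fun x) t) (at t within {0..1})"
      if "t \<in> {0..1}" for t
      unfolding G_def[abs_def] using that by (intro G2_deriv_gf m3 x1) auto
    have S: "(\<lambda>k. (s_fun x * real k + t_fun x) * (x^3 / (x - 1)) ^ k / real ((3 * k) choose k)) sums (G 1 - G 0)"
      by (rule main_series[OF ub dG])
    have G1: "G 1 = 27 * (x - 1) * (x^2 - 6*x + 3) + (4 * x^2 * (1 - x)) * ln (1 - x)"
    proof -
      have "N2 x 1 = 27 * (x - 1)^3 * (x^2 - 6*x + 3)" unfolding N2_def P2_one by (simp add: power3_eq_cube power2_eq_square)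
      moreover have "Qp x 1 = x - 1" by (simp add: Qp_def)
      moreover have "qq x 1 = 1 - x" by (simp add: qq_def power2_eq_square algebra_simps)
      ultimately show ?thesis unfolding G_def using xm by (simp add: power3_eq_cube power2_eq_square)
    qed
    have G0: "G 0 = (-8 * x^2 * (1 - x)) * ln (1 - x)"
      unfolding G_def by (simp add: N2_def qq_def)
    have "G 1 - G 0 = 12 * x^2 * (1 - x) * ln (1 - x) - 27 * (1 - x) * (x^2 - 6*x + 3)"
      unfolding G1 G0 by (simp add: algebra_simps)
    with S show ?thesis using term_conv[OF x1] by simp
  qed
  show "(\<lambda>n. let k = Suc n in
            (((2*x - 3)^2 * real k + 2*x^2 + 2*x - 3) * x^(3*k))
            / ((x - 1)^k * real ((3*k) choose k)))
         sums (-2 * x^3 * (x + 7) / (x + 3)^2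
               + 8 * x^2 * (x - 1) * q_fun x / ((x + 3)^2 * sqrt ((1 - x) * (3 + x))))"
  proof -
    define G where "G t = N1 x t / ((x + 3)^2 * (Qp x t)^2) + (8 * x^2 * (x - 1) / ((x + 3)^2 * sqrt ((1 - x) * (3 + x)))) * arctan ((2 * x * t - x - 1) / sqrt ((1 - x) * (3 + x)))" for t
    have dG: "(G has_real_derivative gf (x^3 / (x - 1)) ((2*x - 3)^2) (2*x^2 + 2*x - 3) t) (at t within {0..1})"
      if "t \<in> {0..1}" for t
      unfolding G_def[abs_def] using that by (intro G1_deriv_gf m3 x1) auto
    define f where "f k = ((2*x - 3)^2 * real k + (2*x^2 + 2*x - 3)) * (x^3 / (x - 1)) ^ k / real ((3 * k) choose k)" for k
    have S: "f sums (G 1 - G 0)" unfolding f_def by (rule main_series[OF ub dG])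
    have x3: "(x + 3)^2 \<noteq> 0" using m3 by simp
    have G1: "G 1 = (-2 * x^3 * (x + 7) + (2*x^2 + 2*x - 3) * (x + 3)^2) / (x + 3)^2
       + (8 * x^2 * (x - 1) / ((x + 3)^2 * sqrt ((1 - x) * (3 + x)))) * arctan ((x - 1) / sqrt ((1 - x) * (3 + x)))"
    proof -
      have "N1 x 1 = (x - 1)^2 * (-2 * x^3 * (x + 7) + (2*x^2 + 2*x - 3) * (x + 3)^2)" unfolding N1_def P1_one by (simp add: power2_eq_square)
      moreover have "Qp x 1 = x - 1" by (simp add: Qp_def)
      moreover have "2 * x * 1 - x - 1 = x - 1" by simp
      ultimately show ?thesis unfolding G_def using xm x3 by simp
    qed
    have G0: "G 0 = (8 * x^2 * (x - 1) / ((x + 3)^2 * sqrt ((1 - x) * (3 + x)))) * arctan (- (x + 1) / sqrt ((1 - x) * (3 + x)))"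
      unfolding G_def by (simp add: N1_def)
    have "G 1 - G 0 = (-2 * x^3 * (x + 7) + (2*x^2 + 2*x - 3) * (x + 3)^2) / (x + 3)^2
       + (8 * x^2 * (x - 1) / ((x + 3)^2 * sqrt ((1 - x) * (3 + x)))) *
         (arctan ((x - 1) / sqrt ((1 - x) * (3 + x))) - arctan (- (x + 1) / sqrt ((1 - x) * (3 + x))))"
    proof -
      have gen: "\<And>R K A1 A0 :: real. (R + K * A1) - K * A0 = R + K * (A1 - A0)" by algebra
      show ?thesis unfolding G1 G0 by (rule gen)
    qed
    also have "\<dots> = (-2 * x^3 * (x + 7) / (x + 3)^2
               + 8 * x^2 * (x - 1) * q_fun x / ((x + 3)^2 * sqrt ((1 - x) * (3 + x)))) + f 0"
      unfolding q_fun_arctan[OF m3 x1] f_def using x3 by (simp add: add_divide_distrib diff_divide_distrib)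
    finally have "f sums ((-2 * x^3 * (x + 7) / (x + 3)^2
               + 8 * x^2 * (x - 1) * q_fun x / ((x + 3)^2 * sqrt ((1 - x) * (3 + x)))) + f 0)"
      using S by simp
    then have "(\<lambda>n. f (Suc n)) sums (-2 * x^3 * (x + 7) / (x + 3)^2
               + 8 * x^2 * (x - 1) * q_fun x / ((x + 3)^2 * sqrt ((1 - x) * (3 + x))))"
      by (simp only: sums_Suc_iff)
    moreover have "f (Suc n) = (let k = Suc n in
            (((2*x - 3)^2 * real k + 2*x^2 + 2*x - 3) * x^(3*k))
            / ((x - 1)^k * real ((3*k) choose k)))" for n
      unfolding f_def Let_def term_conv[OF x1] by (simp add: add.assoc)
    ultimately show ?thesis by simp
  qed
qed

end
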